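(* Let $G=G'\times H$ be a product of commutative groups with $H$ torsion-free, let $U\subset G'$ be finite (identified with $U\times\{0\}\subset G$), and let $\vartheta$ be any of the functionals $\alpha,\alpha',\alpha'',\beta',\beta''$. Then $\vartheta(U,G)=\vartheta(U,G')$.
   Context: $\vartheta(U,K)$ denotes the functional computed with $A,B$ ranging over nonempty finite subsets of the ambient group $K$: $\alpha(U,K)=\inf_{A\supset U,B\supset U}\frac{|A+B|}{\sqrt{|A||B|}}$; $\alpha'(U,K)=\inf_{A\supset U,B\supset U,|A|=|B|}\frac{|A+B|}{|A|}$; $\alpha''(U,K)=\inf_{A\supset U}\frac{|A+A|}{|A|}$; $\beta'(U,K)=\inf_{A,B,|A|=|B|}\frac{|A+B+U|}{\sqrt{|A||B|}}$; $\beta''(U,K)=\inf_A\frac{|A+A+U|}{|A|}$. *)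

theory Defs
  imports Complex_Main "HOL-Library.Product_Plus"
begin

definition sumset :: "'g::ab_group_add set \<Rightarrow> 'g set \<Rightarrow> 'g set" where
  "sumset A B = {a + b | a b. a \<in> A \<and> b \<in> B}"

definition torsion_free :: "'g::ab_group_add itself \<Rightarrow> bool" where
  "torsion_free _ \<longleftrightarrow> (\<forall>(x::'g) (n::nat). 0 < n \<and> (((+) x) ^^ n) 0 = 0 \<longrightarrow> x = 0)"

text \<open>The functionals; the ambient group K is the type 'g, A and B range over
  nonempty finite subsets of K.\<close>
definition alpha :: "'g::ab_group_add set \<Rightarrow> real" where
  "alpha U = Inf {real (card (sumset A B)) / sqrt (real (card A) * real (card B)) | A B.
     finite A \<and> A \<noteq> {} \<and> finite B \<and> B \<noteq> {} \<and> U \<subseteq> A \<and> U \<subseteq> B}"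

definition alpha' :: "'g::ab_group_add set \<Rightarrow> real" where
  "alpha' U = Inf {real (card (sumset A B)) / real (card A) | A B.
     finite A \<and> A \<noteq> {} \<and> finite B \<and> B \<noteq> {} \<and> U \<subseteq> A \<and> U \<subseteq> B \<and> card A = card B}"

definition alpha'' :: "'g::ab_group_add set \<Rightarrow> real" where
  "alpha'' U = Inf {real (card (sumset A A)) / real (card A) | A.
     finite A \<and> A \<noteq> {} \<and> U \<subseteq> A}"

definition beta' :: "'g::ab_group_add set \<Rightarrow> real" where
  "beta' U = Inf {real (card (sumset (sumset A B) U)) / sqrt (real (card A) * real (card B)) | A B.
     finite A \<and> A \<noteq> {} \<and> finite B \<and> B \<noteq> {} \<and> card A = card B}"

definition beta'' :: "'g::ab_group_add set \<Rightarrow> real" where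
  "beta'' U = Inf {real (card (sumset (sumset A A) U)) / real (card A) | A.
     finite A \<and> A \<noteq> {}}"

end

theory Submission
  imports Defs "HOL-Library.FuncSet"
begin

primrec natmul :: "nat \<Rightarrow> 'a::ab_group_add \<Rightarrow> 'a" where
  "natmul 0 x = 0" | "natmul (Suc n) x = x + natmul n x"

definition zmul :: "int \<Rightarrow> 'a::ab_group_add \<Rightarrow> 'a" where
  "zmul k x = natmul (nat k) x - natmul (nat (-k)) x"

lemma natmul_add: "natmul (m+n) x = natmul m x + natmul n x"
  by (induct m) (simp_all add: add.assoc)

lemma natmul_plus: "natmul n (x+y) = natmul n x + natmul n y"
  by (induct n) (simp_all add: algebra_simps)

lemma natmul_zero[simp]: "natmul n 0 = 0"
  by (induct n) simp_all

lemma natmul_funpow: "((+) x ^^ n) 0 = natmul n x"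
  by (induct n) simp_all

lemma zmul_diff: "zmul (int m - int n) x = natmul m x - natmul n x"
proof (cases "n \<le> m")
  case True
  then have "natmul m x = natmul (m-n) x + natmul n x" using natmul_add[of "m-n" n x] by simp
  moreover have "nat (int m - int n) = m - n" "nat (-(int m - int n)) = 0" using True by auto
  ultimately show ?thesis by (simp add: zmul_def)
next
  case False
  then have "natmul n x = natmul (n-m) x + natmul m x" using natmul_add[of "n-m" m x] by simp
  moreover have "nat (int m - int n) = 0" "nat (-(int m - int n)) = n - m" using False by auto
  ultimately show ?thesis by (simp add: zmul_def)
qed

lemma int_split_nat: "(k::int) = int (nat k) - int (nat (-k))" by simp

lemma zmul_add: "zmul (a+b) x = zmul a x + zmul b x"
proof -
  have "a + b = int (nat a + nat b) - int (nat (-a) + nat (-b))" by simp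
  then have "zmul (a+b) x = natmul (nat a + nat b) x - natmul (nat (-a) + nat (-b)) x"
    by (metis zmul_diff)
  then show ?thesis by (simp add: zmul_def natmul_add)
qed

lemma zmul_int: "zmul (int n) x = natmul n x" by (simp add: zmul_def)
lemma zmul_neg: "zmul (-k) x = - zmul k x" by (simp add: zmul_def)
lemma zmul_0[simp]: "zmul 0 x = 0" by (simp add: zmul_def)
lemma zmul_1[simp]: "zmul 1 x = x" by (simp add: zmul_def)
lemma zmul_zero[simp]: "zmul k 0 = 0" by (simp add: zmul_def)
lemma zmul_plus: "zmul k (x+y) = zmul k x + zmul k y"
  by (simp add: zmul_def natmul_plus algebra_simps)
lemma zmul_uminus: "zmul k (-x) = - zmul k x"
proof -
  have "zmul k x + zmul k (-x) = 0" using zmul_plus[of k x "-x"] by simp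
  then show ?thesis by (metis add.inverse_unique)
qed
lemma zmul_sub: "zmul (a-b) x = zmul a x - zmul b x"
  using zmul_add[of a "-b" x] by (simp add: zmul_neg)
lemma zmul_minus: "zmul k (x-y) = zmul k x - zmul k y"
  using zmul_plus[of k x "-y"] by (simp add: zmul_uminus)

lemma zmul_mult_nat: "zmul (int n * b) x = zmul (int n) (zmul b x)"
proof (induct n)
  case 0 then show ?case by simp
next
  case (Suc n)
  have "zmul (int (Suc n) * b) x = zmul (b + int n * b) x" by (simp add: algebra_simps)
  also have "\<dots> = zmul b x + zmul (int n) (zmul b x)" by (simp add: zmul_add Suc)
  also have "\<dots> = natmul (Suc n) (zmul b x)" by (simp add: zmul_int)
  finally show ?case by (metis zmul_int)
qed

lemma zmul_mult: "zmul (a * b) x = zmul a (zmul b x)"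
proof (cases a rule: int_cases)
  case (nonneg n) then show ?thesis by (simp add: zmul_mult_nat)
next
  case (neg n)
  then have a: "a = - int (Suc n)" by simp
  have "zmul (a * b) x = zmul (- (int (Suc n) * b)) x" using a by (metis minus_mult_left)
  also have "\<dots> = - zmul (int (Suc n)) (zmul b x)" by (simp only: zmul_neg zmul_mult_nat)
  also have "\<dots> = zmul a (zmul b x)" using a by (metis zmul_neg)
  finally show ?thesis .
qed

lemma zmul_sum: "finite S \<Longrightarrow> zmul k (\<Sum>t\<in>S. f t) = (\<Sum>t\<in>S. zmul k (f t))"
  by (induct S rule: finite_induct) (simp_all add: zmul_plus)

lemma zmul_inj:
  assumes g: "\<forall>n>0. natmul n g \<noteq> 0" and e: "zmul j g = zmul j' g"
  shows "j = j'"
proof (rule ccontr)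
  assume ne: "j \<noteq> j'"
  have z: "zmul (j - j') g = 0" using e by (simp add: zmul_sub)
  show False
  proof (cases "j - j' > 0")
    case True
    then have "zmul (j-j') g = natmul (nat (j-j')) g" by (simp add: zmul_def)
    then show False using g z True by auto
  next
    case False
    then have "j - j' < 0" using ne by simp
    then have "zmul (j-j') g = - natmul (nat (j'-j)) g" by (simp add: zmul_def)
    then show False using g z \<open>j - j' < 0\<close> by auto
  qed
qed

lemma tf_natmul:
  assumes "torsion_free TYPE('b::ab_group_add)" "0 < n" "natmul n (x::'b) = 0"
  shows "x = 0"
  using assms unfolding torsion_free_def natmul_funpow by blast

definition gen :: "'a::ab_group_add set \<Rightarrow> 'a set" where
  "gen S = {y. \<exists>c. y = (\<Sum>t\<in>S. zmul (c t) t)}"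

lemma gen_0[simp]: "0 \<in> gen S"
  unfolding gen_def by (rule CollectI, rule exI[of _ "\<lambda>_. 0"]) simp

lemma gen_add: "x \<in> gen S \<Longrightarrow> y \<in> gen S \<Longrightarrow> x + y \<in> gen S"
  unfolding gen_def
proof clarify
  fix c d
  show "\<exists>e. (\<Sum>t\<in>S. zmul (c t) t) + (\<Sum>t\<in>S. zmul (d t) t) = (\<Sum>t\<in>S. zmul (e t) t)"
    by (rule exI[of _ "\<lambda>t. c t + d t"]) (simp add: zmul_add sum.distrib)
qed

lemma gen_zmul: "x \<in> gen S \<Longrightarrow> zmul k x \<in> gen S"
  unfolding gen_def
proof clarify
  fix c
  show "\<exists>e. zmul k (\<Sum>t\<in>S. zmul (c t) t) = (\<Sum>t\<in>S. zmul (e t) t)"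
  proof (cases "finite S")
    case True
    then show ?thesis
      by (intro exI[of _ "\<lambda>t. k * c t"]) (simp add: zmul_sum zmul_mult)
  qed simp
qed

lemma gen_uminus: "x \<in> gen S \<Longrightarrow> - x \<in> gen S"
  using gen_zmul[of x S "-1"] by (simp add: zmul_neg)

lemma gen_diff: "x \<in> gen S \<Longrightarrow> y \<in> gen S \<Longrightarrow> x - y \<in> gen S"
  using gen_add[of x S "-y"] gen_uminus[of y S] by simp

lemma gen_mem: "finite S \<Longrightarrow> s \<in> S \<Longrightarrow> s \<in> gen S"
  unfolding gen_def
proof (rule CollectI, rule exI[of _ "\<lambda>t. if t = s then 1 else 0"])
  assume "finite S" "s \<in> S"
  have "(\<lambda>t. zmul (if t = s then 1 else 0) t) = (\<lambda>t. if t = s then t else 0)" by auto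
  then show "s = (\<Sum>t\<in>S. zmul (if t = s then 1 else 0) t)" using \<open>finite S\<close> \<open>s \<in> S\<close>
    by (simp only: sum.delta) simp
qed

lemma gen_insert:
  assumes "finite S" "s \<notin> S"
  shows "y \<in> gen (insert s S) \<longleftrightarrow> (\<exists>x\<in>gen S. \<exists>k. y = x + zmul k s)"
proof
  assume "y \<in> gen (insert s S)"
  then obtain c where "y = (\<Sum>t\<in>insert s S. zmul (c t) t)" unfolding gen_def by blast
  then have "y = (\<Sum>t\<in>S. zmul (c t) t) + zmul (c s) s" using assms by (simp add: add.commute)
  then show "\<exists>x\<in>gen S. \<exists>k. y = x + zmul k s" unfolding gen_def by blast
next
  assume "\<exists>x\<in>gen S. \<exists>k. y = x + zmul k s"
  then obtain c k where y: "y = (\<Sum>t\<in>S. zmul (c t) t) + zmul k s" unfolding gen_def by blast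
  have "(\<Sum>t\<in>S. zmul ((c(s:=k)) t) t) = (\<Sum>t\<in>S. zmul (c t) t)"
    using assms by (intro sum.cong) auto
  then have "y = (\<Sum>t\<in>insert s S. zmul ((c(s:=k)) t) t)" using assms y by (simp add: add.commute)
  then show "y \<in> gen (insert s S)" unfolding gen_def by blast
qed

lemma gen_mono_insert: "finite S \<Longrightarrow> s \<notin> S \<Longrightarrow> x \<in> gen S \<Longrightarrow> x \<in> gen (insert s S)"
  using gen_insert[of S s x] by (metis add_0_right zmul_0)

definition additive_on :: "'b set \<Rightarrow> ('b::ab_group_add \<Rightarrow> int) \<Rightarrow> bool" where
  "additive_on W \<phi> \<longleftrightarrow> (\<forall>x\<in>W. \<forall>y\<in>W. \<phi> (x + y) = \<phi> x + \<phi> y)"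

lemma additive_on_0: "additive_on (gen S) \<phi> \<Longrightarrow> \<phi> 0 = 0"
  unfolding additive_on_def using gen_0[of S] by (metis add_0_right add_right_imp_eq add_0)

lemma phi_exists:
  fixes S :: "'b::ab_group_add set"
  assumes tf: "torsion_free TYPE('b)" and fin: "finite S"
  shows "\<forall>T. finite T \<longrightarrow> T \<subseteq> gen S - {0} \<longrightarrow>
    (\<exists>\<phi>. additive_on (gen S) \<phi> \<and> (\<forall>t\<in>T. \<phi> t \<noteq> 0))"
  using fin
proof (induct S rule: finite_induct)
  case empty
  have "gen ({}::'b set) = {0}" unfolding gen_def by simp
  then show ?case unfolding additive_on_def by (intro allI impI exI[of _ "\<lambda>_. 0"]) auto
next
  case (insert s S)
  note fS = insert(1) and sS = insert(2) and IH = insert(3)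
  show ?case
  proof (intro allI impI)
    fix T assume fT: "finite T" and T: "T \<subseteq> gen (insert s S) - {0}"
    show "\<exists>\<phi>. additive_on (gen (insert s S)) \<phi> \<and> (\<forall>t\<in>T. \<phi> t \<noteq> 0)"
    proof (cases "\<exists>m::nat. m > 0 \<and> zmul (int m) s \<in> gen S")
      case True
      then obtain m :: nat where m: "m > 0" "zmul (int m) s \<in> gen S" by blast
      have into: "zmul (int m) y \<in> gen S" if "y \<in> gen (insert s S)" for y
      proof -
        have "\<exists>x\<in>gen S. \<exists>k. y = x + zmul k s" using gen_insert[OF fS sS] that by simp
        then obtain x k where "x \<in> gen S" "y = x + zmul k s" by blast
        moreover have "zmul (int m) (zmul k s) = zmul k (zmul (int m) s)"
          by (metis zmul_mult[of "int m" k s] zmul_mult[of k "int m" s] mult.commute)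
        ultimately have "zmul (int m) y = zmul (int m) x + zmul k (zmul (int m) s)"
          by (simp add: zmul_plus)
        then show ?thesis using \<open>x \<in> gen S\<close> m(2) by (simp add: gen_add gen_zmul)
      qed
      have "finite ((\<lambda>t. zmul (int m) t) ` T)" using fT by simp
      moreover have "(\<lambda>t. zmul (int m) t) ` T \<subseteq> gen S - {0}"
      proof
        fix z assume "z \<in> (\<lambda>t. zmul (int m) t) ` T"
        then obtain t where t: "t \<in> T" "z = zmul (int m) t" by blast
        have "z \<in> gen S" using t T into by auto
        moreover have "z \<noteq> 0"
        proof
          assume "z = 0"
          then have "natmul m t = 0" using t by (simp add: zmul_int)
          then have "t = 0" using tf_natmul[OF tf m(1)] by blast
          then show False using t T by auto
        qed
        ultimately show "z \<in> gen S - {0}" by simp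
      qed
      ultimately obtain \<phi> where phi: "additive_on (gen S) \<phi>"
        "\<forall>t\<in>(\<lambda>t. zmul (int m) t) ` T. \<phi> t \<noteq> 0" using IH by blast
      show ?thesis
      proof (intro exI[of _ "\<lambda>y. \<phi> (zmul (int m) y)"] conjI)
        show "additive_on (gen (insert s S)) (\<lambda>y. \<phi> (zmul (int m) y))"
          unfolding additive_on_def using phi(1) into unfolding additive_on_def
          by (simp add: zmul_plus)
        show "\<forall>t\<in>T. \<phi> (zmul (int m) t) \<noteq> 0" using phi(2) by blast
      qed
    next
      case False
      have uniq: "x = x' \<and> k = k'" if "x \<in> gen S" "x' \<in> gen S" "x + zmul k s = x' + zmul k' s"
        for x x' k k'
      proof -
        have e: "zmul (k - k') s = x' - x" using that(3) by (simp add: zmul_sub algebra_simps)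
        have "k = k'"
        proof (rule ccontr)
          assume "k \<noteq> k'"
          show False
          proof (cases "k > k'")
            case True
            then have "zmul (int (nat (k - k'))) s \<in> gen S" using e gen_diff[OF that(2,1)] by simp
            then show False using False True by (metis zero_less_nat_eq diff_gt_0_iff_gt)
          next
            case f2: False
            then have "k' > k" using \<open>k \<noteq> k'\<close> by simp
            have "zmul (k' - k) s = x - x'" using e by (metis minus_diff_eq zmul_neg)
            then have "zmul (int (nat (k' - k))) s \<in> gen S" using gen_diff[OF that(1,2)] \<open>k' > k\<close> by simp
            then show False using False \<open>k' > k\<close> by (metis zero_less_nat_eq diff_gt_0_iff_gt)
          qed
        qed
        then show ?thesis using that(3) by simp
      qed
      define dec where "dec y = (SOME p. fst p \<in> gen S \<and> y = fst p + zmul (snd p) s)" for y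
      have dec: "fst (dec y) \<in> gen S \<and> y = fst (dec y) + zmul (snd (dec y)) s"
        if "y \<in> gen (insert s S)" for y
      proof -
        have "\<exists>x\<in>gen S. \<exists>k. y = x + zmul k s" using gen_insert[OF fS sS] that by simp
        then obtain x k where "x \<in> gen S" "y = x + zmul k s" by blast
        then have "\<exists>p. fst p \<in> gen S \<and> y = fst p + zmul (snd p) s" by (intro exI[of _ "(x,k)"]) simp
        then show ?thesis unfolding dec_def by (rule someI_ex)
      qed
      have dec_eq: "dec y = (x, k)" if "x \<in> gen S" "y = x + zmul k s" for x k y
      proof -
        have "y \<in> gen (insert s S)" unfolding gen_insert[OF fS sS] using that by blast
        from dec[OF this] that uniq show ?thesis by (metis prod.collapse)
      qed
      define T0 where "T0 = (\<lambda>t. fst (dec t)) ` T - {0}"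
      have "finite T0" using fT unfolding T0_def by simp
      moreover have "T0 \<subseteq> gen S - {0}" unfolding T0_def using T dec by auto
      ultimately obtain \<phi> where phi: "additive_on (gen S) \<phi>" "\<forall>t\<in>T0. \<phi> t \<noteq> 0" using IH by blast
      have phi0: "\<phi> 0 = 0" using additive_on_0[OF phi(1)] .
      define M where "M = 1 + (\<Sum>t\<in>T. \<bar>snd (dec t)\<bar>)"
      have Mbig: "\<bar>snd (dec t)\<bar> < M" if "t \<in> T" for t
      proof -
        have "\<bar>snd (dec t)\<bar> \<le> (\<Sum>t\<in>T. \<bar>snd (dec t)\<bar>)"
          using fT that by (intro member_le_sum) auto
        then show ?thesis unfolding M_def by simp
      qed
      define \<psi> where "\<psi> y = M * \<phi> (fst (dec y)) + snd (dec y)" for y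
      show ?thesis
      proof (intro exI[of _ \<psi>] conjI)
        show "additive_on (gen (insert s S)) \<psi>"
          unfolding additive_on_def
        proof (intro ballI)
          fix x y assume x: "x \<in> gen (insert s S)" and y: "y \<in> gen (insert s S)"
          have "x + y = (fst (dec x) + fst (dec y)) + zmul (snd (dec x) + snd (dec y)) s"
            using dec[OF x] dec[OF y] by (simp add: zmul_add algebra_simps)
          then have "dec (x + y) = (fst (dec x) + fst (dec y), snd (dec x) + snd (dec y))"
            using dec[OF x] dec[OF y] by (intro dec_eq) (auto intro: gen_add)
          then show "\<psi> (x + y) = \<psi> x + \<psi> y"
            unfolding \<psi>_def using phi(1) dec[OF x] dec[OF y] unfolding additive_on_def
            by (simp add: algebra_simps)
        qed
        show "\<forall>t\<in>T. \<psi> t \<noteq> 0"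
        proof
          fix t assume t: "t \<in> T"
          have tg: "t \<in> gen (insert s S)" "t \<noteq> 0" using t T by auto
          show "\<psi> t \<noteq> 0"
          proof (cases "fst (dec t) = 0")
            case True
            then have "snd (dec t) \<noteq> 0" using dec[OF tg(1)] tg(2) by auto
            then show ?thesis unfolding \<psi>_def using True phi0 by simp
          next
            case False
            then have "fst (dec t) \<in> T0" unfolding T0_def using t by auto
            then have "\<phi> (fst (dec t)) \<noteq> 0" using phi(2) by blast
            then have a1: "1 \<le> \<bar>\<phi> (fst (dec t))\<bar>" by arith
            have "0 \<le> M" using Mbig[OF t] by arith
            then have "M * 1 \<le> M * \<bar>\<phi> (fst (dec t))\<bar>" using mult_left_mono[OF a1 \<open>0 \<le> M\<close>] by simp
            then have "\<bar>M * \<phi> (fst (dec t))\<bar> \<ge> M" using \<open>0 \<le> M\<close> by (simp add: abs_mult)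
            then show ?thesis unfolding \<psi>_def using Mbig[OF t] by linarith
          qed
        qed
      qed
    qed
  qed
qed

lemma freiman_map:
  fixes g :: "'a::ab_group_add" and X :: "('a \<times> 'b::ab_group_add) set"
  assumes tf: "torsion_free TYPE('b)" and g: "\<forall>n>0. natmul n g \<noteq> 0" and fX: "finite X"
  shows "\<exists>f. (\<forall>u. f (u, 0) = u) \<and>
     (\<forall>x\<in>UNIV \<times> gen (snd ` X). \<forall>y\<in>UNIV \<times> gen (snd ` X). f (x + y) = f x + f y) \<and> inj_on f X"
proof -
  define S where "S = snd ` X"
  have fS: "finite S" using fX unfolding S_def by simp
  have XS: "snd x \<in> gen S" if "x \<in> X" for x using that gen_mem[OF fS] unfolding S_def by blast
  define T where "T = (\<lambda>(x, y). snd x - snd y) ` (X \<times> X) - {0}"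
  have fT: "finite T" unfolding T_def using fX by simp
  have TS: "T \<subseteq> gen S - {0}" unfolding T_def using XS gen_diff by fastforce
  obtain \<phi> where phi: "additive_on (gen S) \<phi>" "\<forall>t\<in>T. \<phi> t \<noteq> 0"
    using phi_exists[OF tf fS] fT TS by blast
  have phi0: "\<phi> 0 = 0" using additive_on_0[OF phi(1)] .
  define D where "D = (\<lambda>(x, y). fst x - fst y) ` (X \<times> X)"
  have fD: "finite D" unfolding D_def using fX by simp
  define j where "j d = (SOME j. zmul j g = d)" for d
  define N where "N = 1 + (\<Sum>d\<in>D. \<bar>j d\<bar>)"
  have Nbig: "\<bar>j d\<bar> < N" if "d \<in> D" for d
  proof -
    have "\<bar>j d\<bar> \<le> (\<Sum>d\<in>D. \<bar>j d\<bar>)" using fD that by (intro member_le_sum) auto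
    then show ?thesis unfolding N_def by simp
  qed
  have Npos: "0 < N" unfolding N_def by (simp add: add_pos_nonneg sum_nonneg)
  define f where "f p = fst p + zmul (N * \<phi> (snd p)) g" for p :: "'a \<times> 'b"
  show ?thesis
  proof (intro exI[of _ f] conjI allI ballI)
    fix u show "f (u, 0) = u" unfolding f_def by (simp add: phi0)
  next
    fix x y :: "'a \<times> 'b" assume x: "x \<in> UNIV \<times> gen (snd ` X)" and y: "y \<in> UNIV \<times> gen (snd ` X)"
    then have "\<phi> (snd x + snd y) = \<phi> (snd x) + \<phi> (snd y)"
      using phi(1) unfolding additive_on_def S_def by auto
    then show "f (x + y) = f x + f y" unfolding f_def
      by (simp add: distrib_left zmul_add algebra_simps)
  next
    show "inj_on f X"
    proof (rule inj_onI)
      fix x y assume x: "x \<in> X" and y: "y \<in> X" and e: "f x = f y"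
      define h where "h = snd x - snd y"
      have hS: "h \<in> gen S" unfolding h_def using XS x y gen_diff by blast
      have "snd x = h + snd y" unfolding h_def by simp
      then have ph: "\<phi> (snd x) = \<phi> h + \<phi> (snd y)"
        using phi(1) hS XS[OF y] unfolding additive_on_def by metis
      define d where "d = fst x - fst y"
      have dD: "d \<in> D" unfolding D_def d_def using x y by force
      have dz: "d = zmul (- (N * \<phi> h)) g"
        using e unfolding f_def d_def
        by (simp add: ph distrib_left zmul_add zmul_neg algebra_simps)
      have "h = 0"
      proof (rule ccontr)
        assume "h \<noteq> 0"
        then have "h \<in> T" unfolding T_def h_def using x y by force
        then have "\<phi> h \<noteq> 0" using phi(2) by blast
        have "zmul (j d) g = d" unfolding j_def using dz by (metis (mono_tags, lifting) someI)
        then have "j d = - (N * \<phi> h)" using zmul_inj[OF g] dz by metis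
        then have "\<bar>j d\<bar> = N * \<bar>\<phi> h\<bar>" using Npos by (simp add: abs_mult)
        moreover have "1 \<le> \<bar>\<phi> h\<bar>" using \<open>\<phi> h \<noteq> 0\<close> by arith
        ultimately have "N \<le> \<bar>j d\<bar>" using mult_left_mono[of 1 "\<bar>\<phi> h\<bar>" N] Npos by simp
        then show False using Nbig[OF dD] by simp
      qed
      then have "d = 0" using dz phi0 by simp
      then show "x = y" using \<open>h = 0\<close> unfolding d_def h_def by (simp add: prod_eq_iff)
    qed
  qed
qed

lemma torsion_gen_finite:
  fixes U :: "'a::ab_group_add set"
  assumes tor: "\<forall>g::'a. \<exists>n>0. natmul n g = 0" and fU: "finite U"
  shows "finite (gen U)"
proof -
  define n where "n u = (SOME n. n > 0 \<and> natmul n u = 0)" for u :: 'a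
  have n: "n u > 0 \<and> natmul (n u) u = 0" for u unfolding n_def using tor by (metis (mono_tags, lifting) someI_ex)
  have red: "zmul (c mod int (n u)) u = zmul c u" for c u
  proof -
    have "c = (c div int (n u)) * int (n u) + c mod int (n u)" by simp
    then have "zmul c u = zmul ((c div int (n u)) * int (n u)) u + zmul (c mod int (n u)) u"
      by (metis zmul_add)
    also have "zmul ((c div int (n u)) * int (n u)) u = 0"
      by (simp add: zmul_mult zmul_int n)
    finally show ?thesis by simp
  qed
  have sub: "gen U \<subseteq> (\<lambda>c. \<Sum>t\<in>U. zmul (c t) t) ` (PiE U (\<lambda>u. {0..<int (n u)}))"
  proof
    fix y assume "y \<in> gen U"
    then obtain c where y: "y = (\<Sum>t\<in>U. zmul (c t) t)" unfolding gen_def by blast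
    define c' :: "'a \<Rightarrow> int" where "c' = restrict (\<lambda>t. c t mod int (n t)) U"
    have "c' \<in> PiE U (\<lambda>u. {0..<int (n u)})" unfolding c'_def using n by (auto simp: PiE_iff)
    moreover have "y = (\<Sum>t\<in>U. zmul (c' t) t)" unfolding y c'_def
      by (intro sum.cong) (simp_all add: red)
    ultimately show "y \<in> (\<lambda>c. \<Sum>t\<in>U. zmul (c t) t) ` (PiE U (\<lambda>u. {0..<int (n u)}))" by blast
  qed
  have fin: "finite (PiE U (\<lambda>u. {0..<int (n u)}))" using fU by (intro finite_PiE) auto
  show ?thesis by (rule finite_subset[OF sub finite_imageI[OF fin]])
qed

lemma sumset_image:
  assumes "\<forall>x\<in>A. \<forall>y\<in>B. f (x + y) = f x + f y"
  shows "f ` sumset A B = sumset (f ` A) (f ` B)"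
proof
  show "f ` sumset A B \<subseteq> sumset (f ` A) (f ` B)"
  proof
    fix z assume "z \<in> f ` sumset A B"
    then obtain a b where "a \<in> A" "b \<in> B" "z = f (a + b)" unfolding sumset_def by blast
    then show "z \<in> sumset (f ` A) (f ` B)" using assms unfolding sumset_def by blast
  qed
  show "sumset (f ` A) (f ` B) \<subseteq> f ` sumset A B"
  proof
    fix z assume "z \<in> sumset (f ` A) (f ` B)"
    then obtain a b where ab: "a \<in> A" "b \<in> B" "z = f a + f b" unfolding sumset_def by blast
    then have "z = f (a + b)" using assms by simp
    moreover have "a + b \<in> sumset A B" using ab unfolding sumset_def by blast
    ultimately show "z \<in> f ` sumset A B" by blast
  qed
qed

lemma sumset_alt: "sumset A B = (\<lambda>(a, b). a + b) ` (A \<times> B)"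
  unfolding sumset_def by auto

lemma finite_sumset: "finite A \<Longrightarrow> finite B \<Longrightarrow> finite (sumset A B)"
  unfolding sumset_alt by simp

lemma sumset_empty[simp]: "sumset A {} = {}" "sumset {} B = {}"
  unfolding sumset_def by auto

lemma sumset_ne: "A \<noteq> {} \<Longrightarrow> B \<noteq> {} \<Longrightarrow> sumset A B \<noteq> {}"
  unfolding sumset_def by auto

lemma sumset_subset: "A \<subseteq> W \<Longrightarrow> B \<subseteq> W \<Longrightarrow> \<forall>x\<in>W. \<forall>y\<in>W. x + y \<in> W \<Longrightarrow> sumset A B \<subseteq> W"
  unfolding sumset_def by auto

lemma card_sumset_ge1:
  assumes "finite A" "finite B" "b \<in> B"
  shows "card A \<le> card (sumset A B)"
proof -
  have "(\<lambda>a. a + b) ` A \<subseteq> sumset A B" using assms unfolding sumset_def by auto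
  moreover have "card ((\<lambda>a. a + b) ` A) = card A" by (rule card_image) (simp add: inj_on_def)
  ultimately show ?thesis using finite_sumset[OF assms(1,2)] by (metis card_mono)
qed

lemma card_sumset_ge2:
  assumes "finite A" "finite B" "a \<in> A"
  shows "card B \<le> card (sumset A B)"
proof -
  have "(\<lambda>b. a + b) ` B \<subseteq> sumset A B" using assms unfolding sumset_def by auto
  moreover have "card ((\<lambda>b. a + b) ` B) = card B" by (rule card_image) (simp add: inj_on_def)
  ultimately show ?thesis using finite_sumset[OF assms(1,2)] by (metis card_mono)
qed

lemma sqrt_le_max:
  fixes a b c :: real
  assumes "0 \<le> a" "0 \<le> b" "a \<le> c" "b \<le> c"
  shows "sqrt (a * b) \<le> c"
proof -
  have "a * b \<le> c * c" using assms by (intro mult_mono) auto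
  then have "sqrt (a * b) \<le> sqrt (c * c)" by (rule real_sqrt_le_mono)
  then show ?thesis using assms by simp
qed

lemma ratio_ge1:
  assumes "finite A" "finite B" "A \<noteq> {}" "B \<noteq> {}" "card A \<le> c" "card B \<le> c"
  shows "1 \<le> real c / sqrt (real (card A) * real (card B))"
proof -
  have pos: "0 < sqrt (real (card A) * real (card B))" using assms by (simp add: card_gt_0_iff)
  have "sqrt (real (card A) * real (card B)) \<le> real c" using assms by (intro sqrt_le_max) auto
  then show ?thesis using pos by (simp add: le_divide_eq_1_pos)
qed

lemma inf_eq:
  fixes X Y :: "real set"
  assumes "X \<noteq> {}" "Y \<noteq> {}" "\<forall>x\<in>X. 0 \<le> x" "\<forall>y\<in>Y. 0 \<le> y"
    "\<forall>x\<in>X. \<exists>y\<in>Y. y \<le> x" "\<forall>y\<in>Y. \<exists>x\<in>X. x \<le> y"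
  shows "Inf X = Inf Y"
proof (rule antisym)
  have bX: "bdd_below X" and bY: "bdd_below Y" using assms(3,4) unfolding bdd_below_def by auto
  show "Inf X \<le> Inf Y"
  proof (rule cInf_greatest[OF assms(2)])
    fix y assume "y \<in> Y" then obtain x where x: "x \<in> X" "x \<le> y" using assms(6) by blast
    then show "Inf X \<le> y" using cInf_lower[OF x(1) bX] by linarith
  qed
  show "Inf Y \<le> Inf X"
  proof (rule cInf_greatest[OF assms(1)])
    fix x assume "x \<in> X" then obtain y where y: "y \<in> Y" "y \<le> x" using assms(5) by blast
    then show "Inf Y \<le> x" using cInf_lower[OF y(1) bY] by linarith
  qed
qed

definition good_map where
  "good_map f W X \<longleftrightarrow> (\<forall>x\<in>W. \<forall>y\<in>W. f (x + y) = f x + f y) \<and> (\<forall>x\<in>W. \<forall>y\<in>W. x + y \<in> W)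
     \<and> X \<subseteq> W \<and> inj_on f X"

lemma transfer_cards:
  assumes gm: "good_map f W (A \<union> B \<union> sumset A B \<union> sumset (sumset A B) Z)"
    and AW: "A \<subseteq> W" and BW: "B \<subseteq> W" and ZW: "Z \<subseteq> W"
  shows "card (f ` A) = card A" "card (f ` B) = card B"
    "card (sumset (f ` A) (f ` B)) = card (sumset A B)"
    "card (sumset (sumset (f ` A) (f ` B)) (f ` Z)) = card (sumset (sumset A B) Z)"
proof -
  note gm' = gm[unfolded good_map_def]
  have add: "\<forall>x\<in>W. \<forall>y\<in>W. f (x + y) = f x + f y" using gm' by (rule conjunct1)
  have clo: "\<forall>x\<in>W. \<forall>y\<in>W. x + y \<in> W" using gm'[THEN conjunct2] by (rule conjunct1)
  have inj: "inj_on f (A \<union> B \<union> sumset A B \<union> sumset (sumset A B) Z)"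
    using gm'[THEN conjunct2, THEN conjunct2] by (rule conjunct2)
  have ABW: "sumset A B \<subseteq> W" using sumset_subset[OF AW BW clo] .
  have e1: "sumset (f ` A) (f ` B) = f ` sumset A B"
    using add AW BW by (intro sumset_image[symmetric]) blast
  have e2: "sumset (f ` sumset A B) (f ` Z) = f ` sumset (sumset A B) Z"
    using add ABW ZW by (intro sumset_image[symmetric]) blast
  show "card (f ` A) = card A" by (rule card_image, rule inj_on_subset[OF inj]) auto
  show "card (f ` B) = card B" by (rule card_image, rule inj_on_subset[OF inj]) auto
  show "card (sumset (f ` A) (f ` B)) = card (sumset A B)"
    unfolding e1 by (rule card_image, rule inj_on_subset[OF inj]) auto
  show "card (sumset (sumset (f ` A) (f ` B)) (f ` Z)) = card (sumset (sumset A B) Z)"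
    unfolding e1 e2 by (rule card_image, rule inj_on_subset[OF inj]) auto
qed

lemma good_map_mono:
  assumes g: "good_map f W X" and YX: "Y \<subseteq> X" shows "good_map f W Y"
proof -
  note g' = g[unfolded good_map_def]
  have a: "\<forall>x\<in>W. \<forall>y\<in>W. f (x + y) = f x + f y" using g' by (rule conjunct1)
  have c: "\<forall>x\<in>W. \<forall>y\<in>W. x + y \<in> W" using g'[THEN conjunct2] by (rule conjunct1)
  have s: "X \<subseteq> W" using g'[THEN conjunct2, THEN conjunct2] by (rule conjunct1)
  have i: "inj_on f X" using g'[THEN conjunct2, THEN conjunct2] by (rule conjunct2)
  show ?thesis unfolding good_map_def
    using a c subset_trans[OF YX s] inj_on_subset[OF i YX] by (intro conjI)
qed

definition HM :: "'a::ab_group_add set \<Rightarrow> ('a \<times> 'b::ab_group_add) set \<Rightarrow> bool" where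
  "HM U V \<longleftrightarrow> (\<forall>X. finite X \<longrightarrow> (\<exists>f W. good_map f W (X \<union> V) \<and> f ` V = U))"

definition HF :: "'a::ab_group_add set \<Rightarrow> bool" where
  "HF U \<longleftrightarrow> (\<exists>F. finite F \<and> F \<noteq> {} \<and> U \<subseteq> F \<and> sumset F F = F \<and> sumset F U = (if U = {} then {} else F))"

lemma emb_good: "good_map (\<lambda>u. (u, 0::'b::ab_group_add)) UNIV (X::'a::ab_group_add set)"
  unfolding good_map_def by (auto simp: inj_on_def)

lemma HM_use:
  assumes "HM U V" "finite A" "finite B" "finite V"
  shows "\<exists>f W. good_map f W (A \<union> B \<union> sumset A B \<union> sumset (sumset A B) V)
     \<and> A \<subseteq> W \<and> B \<subseteq> W \<and> V \<subseteq> W \<and> f ` V = U"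
proof -
  let ?X = "A \<union> B \<union> sumset A B \<union> sumset (sumset A B) V"
  have fin: "finite ?X" using assms by (simp add: finite_sumset)
  have ex: "\<exists>f W. good_map f W (?X \<union> V) \<and> f ` V = U"
    using assms(1)[unfolded HM_def, rule_format, OF fin] .
  then obtain f W where fW: "good_map f W (?X \<union> V)" "f ` V = U" by blast
  have sub: "?X \<union> V \<subseteq> W" using fW(1)[unfolded good_map_def, THEN conjunct2, THEN conjunct2] by (rule conjunct1)
  have g: "good_map f W ?X" using good_map_mono[OF fW(1)] by simp
  have "A \<subseteq> W" "B \<subseteq> W" "V \<subseteq> W" using sub by auto
  then show ?thesis using g fW(2) by blast
qed

lemma sqrt_sq: "sqrt (real n * real n) = real n" by (simp only: real_sqrt_abs2 abs_of_nat)

lemma ratio_nonneg: "0 \<le> real a / sqrt (real b * real c)" by simp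

lemma alpha_eq:
  fixes U :: "'a::ab_group_add set" and V :: "('a \<times> 'b::ab_group_add) set"
  assumes fU: "finite U" and Vd: "V = (\<lambda>u. (u, 0)) ` U" and H: "HM U V \<or> HF U"
  shows "alpha V = alpha U"
proof -
  have fV: "finite V" using fU Vd by simp
  let ?SG = "{real (card (sumset A B)) / sqrt (real (card A) * real (card B)) | A B.
     finite A \<and> A \<noteq> {} \<and> finite B \<and> B \<noteq> {} \<and> V \<subseteq> A \<and> V \<subseteq> B}"
  let ?SU = "{real (card (sumset A B)) / sqrt (real (card A) * real (card B)) | A B.
     finite A \<and> A \<noteq> {} \<and> finite B \<and> B \<noteq> {} \<and> U \<subseteq> A \<and> U \<subseteq> B}"
  have n1: "?SG \<noteq> {}"
  proof -
    have "real (card (sumset (insert 0 V) (insert 0 V))) / sqrt (real (card (insert 0 V)) * real (card (insert 0 V))) \<in> ?SG"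
      by (rule CollectI, rule exI[of _ "insert 0 V"], rule exI[of _ "insert 0 V"], intro conjI, rule refl) (use fV in auto)
    then show ?thesis by blast
  qed
  have n2: "?SU \<noteq> {}"
  proof -
    have "real (card (sumset (insert 0 U) (insert 0 U))) / sqrt (real (card (insert 0 U)) * real (card (insert 0 U))) \<in> ?SU"
      by (rule CollectI, rule exI[of _ "insert 0 U"], rule exI[of _ "insert 0 U"], intro conjI, rule refl) (use fU in auto)
    then show ?thesis by blast
  qed
  have p1: "\<forall>x\<in>?SG. 0 \<le> x" by auto
  have p2: "\<forall>x\<in>?SU. 0 \<le> x" by auto
  have c1: "\<forall>x\<in>?SG. \<exists>y\<in>?SU. y \<le> x"
  proof (intro ballI)
    fix x assume "x \<in> ?SG"
    then obtain A B where AB: "x = real (card (sumset A B)) / sqrt (real (card A) * real (card B))"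
      "finite A" "A \<noteq> {}" "finite B" "B \<noteq> {}" "V \<subseteq> A" "V \<subseteq> B" by blast
    from H show "\<exists>y\<in>?SU. y \<le> x"
    proof
      assume "HM U V"
      then obtain f W where fW: "good_map f W (A \<union> B \<union> sumset A B \<union> sumset (sumset A B) V)"
        "A \<subseteq> W" "B \<subseteq> W" "V \<subseteq> W" "f ` V = U"
        using HM_use[OF \<open>HM U V\<close> AB(2) AB(4) fV] by (elim exE conjE) (rule that)
      note tc = transfer_cards[OF fW(1-4)]
      have sub: "U \<subseteq> f ` A" "U \<subseteq> f ` B" using fW(5) AB by auto
      have eq: "x = real (card (sumset (f ` A) (f ` B))) / sqrt (real (card (f ` A)) * real (card (f ` B)))"
        unfolding tc(1) tc(2) tc(3) by (rule AB(1))
      have "x \<in> ?SU"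
        by (rule CollectI, rule exI[of _ "f ` A"], rule exI[of _ "f ` B"], intro conjI, rule eq)
           (use AB sub in auto)
      then show ?thesis by (rule bexI[rotated]) simp
    next
      assume "HF U"
      then obtain F where F: "finite F" "F \<noteq> {}" "U \<subseteq> F" "sumset F F = F" unfolding HF_def by blast
      have "1 \<le> x" unfolding AB(1) using AB
        by (intro ratio_ge1) (auto intro: card_sumset_ge1 card_sumset_ge2)
      moreover have e1: "real (card (sumset F F)) / sqrt (real (card F) * real (card F)) = 1"
      proof -
        have "0 < card F" using F by (simp add: card_gt_0_iff)
        then show ?thesis unfolding F(4) sqrt_sq by simp
      qed
      moreover have "real (card (sumset F F)) / sqrt (real (card F) * real (card F)) \<in> ?SU"
        by (rule CollectI, rule exI[of _ F], rule exI[of _ F]) (use F in blast)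
      ultimately show ?thesis by (intro bexI[of _ 1]) simp_all
    qed
  qed
  have c2: "\<forall>x\<in>?SU. \<exists>y\<in>?SG. y \<le> x"
  proof (intro ballI)
    fix x assume "x \<in> ?SU"
    then obtain A B where AB: "x = real (card (sumset A B)) / sqrt (real (card A) * real (card B))"
      "finite A" "A \<noteq> {}" "finite B" "B \<noteq> {}" "U \<subseteq> A" "U \<subseteq> B" by blast
    let ?e = "\<lambda>u. (u, 0::'b)"
    note tc = transfer_cards[OF emb_good[of "A \<union> B \<union> sumset A B \<union> sumset (sumset A B) U"] subset_UNIV subset_UNIV subset_UNIV]
    have sub: "V \<subseteq> ?e ` A" "V \<subseteq> ?e ` B" using Vd AB by auto
    have eq: "x = real (card (sumset (?e ` A) (?e ` B))) / sqrt (real (card (?e ` A)) * real (card (?e ` B)))"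
      unfolding tc(1) tc(2) tc(3) by (rule AB(1))
    have "x \<in> ?SG"
      by (rule CollectI, rule exI[of _ "?e ` A"], rule exI[of _ "?e ` B"], intro conjI, rule eq)
         (use AB sub in auto)
    then show "\<exists>y\<in>?SG. y \<le> x" by (rule bexI[rotated]) simp
  qed
  show ?thesis unfolding alpha_def by (rule inf_eq[OF n1 n2 p1 p2 c1 c2])
qed


lemma ratio2_ge1:
  assumes "finite A" "A \<noteq> {}" "card A \<le> c"
  shows "1 \<le> real c / real (card A)"
proof -
  have "0 < real (card A)" using assms by (simp add: card_gt_0_iff)
  then show ?thesis using assms(3) by (simp add: le_divide_eq_1_pos)
qed

lemma alpha'_eq:
  fixes U :: "'a::ab_group_add set" and V :: "('a \<times> 'b::ab_group_add) set"
  assumes fU: "finite U" and Vd: "V = (\<lambda>u. (u, 0)) ` U" and H: "HM U V \<or> HF U"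
  shows "alpha' V = alpha' U"
proof -
  have fV: "finite V" using fU Vd by simp
  let ?SG = "{real (card (sumset A B)) / real (card A) | A B.
     finite A \<and> A \<noteq> {} \<and> finite B \<and> B \<noteq> {} \<and> V \<subseteq> A \<and> V \<subseteq> B \<and> card A = card B}"
  let ?SU = "{real (card (sumset A B)) / real (card A) | A B.
     finite A \<and> A \<noteq> {} \<and> finite B \<and> B \<noteq> {} \<and> U \<subseteq> A \<and> U \<subseteq> B \<and> card A = card B}"
  have n1: "?SG \<noteq> {}"
  proof -
    have "real (card (sumset (insert 0 V) (insert 0 V))) / real (card (insert 0 V)) \<in> ?SG"
      by (rule CollectI, rule exI[of _ "insert 0 V"], rule exI[of _ "insert 0 V"], intro conjI, rule refl) (use fV in auto)
    then show ?thesis by blast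
  qed
  have n2: "?SU \<noteq> {}"
  proof -
    have "real (card (sumset (insert 0 U) (insert 0 U))) / real (card (insert 0 U)) \<in> ?SU"
      by (rule CollectI, rule exI[of _ "insert 0 U"], rule exI[of _ "insert 0 U"], intro conjI, rule refl) (use fU in auto)
    then show ?thesis by blast
  qed
  have p1: "\<forall>x\<in>?SG. 0 \<le> x" by auto
  have p2: "\<forall>x\<in>?SU. 0 \<le> x" by auto
  have c1: "\<forall>x\<in>?SG. \<exists>y\<in>?SU. y \<le> x"
  proof (intro ballI)
    fix x assume "x \<in> ?SG"
    then obtain A B where AB: "x = real (card (sumset A B)) / real (card A)"
      "finite A" "A \<noteq> {}" "finite B" "B \<noteq> {}" "V \<subseteq> A" "V \<subseteq> B" "card A = card B" by blast
    from H show "\<exists>y\<in>?SU. y \<le> x"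
    proof
      assume "HM U V"
      then obtain f W where fW: "good_map f W (A \<union> B \<union> sumset A B \<union> sumset (sumset A B) V)"
        "A \<subseteq> W" "B \<subseteq> W" "V \<subseteq> W" "f ` V = U"
        using HM_use[OF \<open>HM U V\<close> AB(2) AB(4) fV] by (elim exE conjE) (rule that)
      note tc = transfer_cards[OF fW(1-4)]
      have sub: "U \<subseteq> f ` A" "U \<subseteq> f ` B" using fW(5) AB by auto
      have eq: "x = real (card (sumset (f ` A) (f ` B))) / real (card (f ` A))"
        unfolding tc(1) tc(2) tc(3) by (rule AB(1))
      have cc: "card (f ` A) = card (f ` B)" unfolding tc(1) tc(2) by (rule AB(8))
      have "x \<in> ?SU"
        by (rule CollectI, rule exI[of _ "f ` A"], rule exI[of _ "f ` B"], intro conjI, rule eq)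
           (use AB sub cc in auto)
      then show ?thesis by (rule bexI[rotated]) simp
    next
      assume "HF U"
      then obtain F where F: "finite F" "F \<noteq> {}" "U \<subseteq> F" "sumset F F = F" unfolding HF_def by blast
      obtain b where "b \<in> B" using AB by blast
      have "card A \<le> card (sumset A B)" by (rule card_sumset_ge1[OF AB(2) AB(4) \<open>b \<in> B\<close>])
      then have "1 \<le> x" unfolding AB(1) by (rule ratio2_ge1[OF AB(2) AB(3)])
      moreover have e1: "real (card (sumset F F)) / real (card F) = 1"
      proof -
        have "0 < card F" using F by (simp add: card_gt_0_iff)
        then show ?thesis unfolding F(4) by simp
      qed
      moreover have "real (card (sumset F F)) / real (card F) \<in> ?SU"
        by (rule CollectI, rule exI[of _ F], rule exI[of _ F]) (use F in blast)
      ultimately show ?thesis by (intro bexI[of _ 1]) simp_all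
    qed
  qed
  have c2: "\<forall>x\<in>?SU. \<exists>y\<in>?SG. y \<le> x"
  proof (intro ballI)
    fix x assume "x \<in> ?SU"
    then obtain A B where AB: "x = real (card (sumset A B)) / real (card A)"
      "finite A" "A \<noteq> {}" "finite B" "B \<noteq> {}" "U \<subseteq> A" "U \<subseteq> B" "card A = card B" by blast
    let ?e = "\<lambda>u. (u, 0::'b)"
    note tc = transfer_cards[OF emb_good[of "A \<union> B \<union> sumset A B \<union> sumset (sumset A B) U"] subset_UNIV subset_UNIV subset_UNIV]
    have sub: "V \<subseteq> ?e ` A" "V \<subseteq> ?e ` B" using Vd AB by auto
    have eq: "x = real (card (sumset (?e ` A) (?e ` B))) / real (card (?e ` A))"
      unfolding tc(1) tc(2) tc(3) by (rule AB(1))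
    have cc: "card (?e ` A) = card (?e ` B)" unfolding tc(1) tc(2) by (rule AB(8))
    have "x \<in> ?SG"
      by (rule CollectI, rule exI[of _ "?e ` A"], rule exI[of _ "?e ` B"], intro conjI, rule eq)
         (use AB sub cc in auto)
    then show "\<exists>y\<in>?SG. y \<le> x" by (rule bexI[rotated]) simp
  qed
  show ?thesis unfolding alpha'_def by (rule inf_eq[OF n1 n2 p1 p2 c1 c2])
qed

lemma alpha''_eq:
  fixes U :: "'a::ab_group_add set" and V :: "('a \<times> 'b::ab_group_add) set"
  assumes fU: "finite U" and Vd: "V = (\<lambda>u. (u, 0)) ` U" and H: "HM U V \<or> HF U"
  shows "alpha'' V = alpha'' U"
proof -
  have fV: "finite V" using fU Vd by simp
  let ?SG = "{real (card (sumset A A)) / real (card A) | A. finite A \<and> A \<noteq> {} \<and> V \<subseteq> A}"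
  let ?SU = "{real (card (sumset A A)) / real (card A) | A. finite A \<and> A \<noteq> {} \<and> U \<subseteq> A}"
  have n1: "?SG \<noteq> {}"
  proof -
    have "real (card (sumset (insert 0 V) (insert 0 V))) / real (card (insert 0 V)) \<in> ?SG"
      by (rule CollectI, rule exI[of _ "insert 0 V"], intro conjI, rule refl) (use fV in auto)
    then show ?thesis by blast
  qed
  have n2: "?SU \<noteq> {}"
  proof -
    have "real (card (sumset (insert 0 U) (insert 0 U))) / real (card (insert 0 U)) \<in> ?SU"
      by (rule CollectI, rule exI[of _ "insert 0 U"], intro conjI, rule refl) (use fU in auto)
    then show ?thesis by blast
  qed
  have p1: "\<forall>x\<in>?SG. 0 \<le> x" by auto
  have p2: "\<forall>x\<in>?SU. 0 \<le> x" by auto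
  have c1: "\<forall>x\<in>?SG. \<exists>y\<in>?SU. y \<le> x"
  proof (intro ballI)
    fix x assume "x \<in> ?SG"
    then obtain A where AB: "x = real (card (sumset A A)) / real (card A)"
      "finite A" "A \<noteq> {}" "V \<subseteq> A" by blast
    from H show "\<exists>y\<in>?SU. y \<le> x"
    proof
      assume "HM U V"
      then obtain f W where fW: "good_map f W (A \<union> A \<union> sumset A A \<union> sumset (sumset A A) V)"
        "A \<subseteq> W" "A \<subseteq> W" "V \<subseteq> W" "f ` V = U"
        using HM_use[OF \<open>HM U V\<close> AB(2) AB(2) fV] by (elim exE conjE) (rule that)
      note tc = transfer_cards[OF fW(1-4)]
      have sub: "U \<subseteq> f ` A" using fW(5) AB by auto
      have eq: "x = real (card (sumset (f ` A) (f ` A))) / real (card (f ` A))"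
        unfolding tc(1) tc(3) by (rule AB(1))
      have "x \<in> ?SU"
        by (rule CollectI, rule exI[of _ "f ` A"], intro conjI, rule eq)
           (use AB sub in auto)
      then show ?thesis by (rule bexI[rotated]) simp
    next
      assume "HF U"
      then obtain F where F: "finite F" "F \<noteq> {}" "U \<subseteq> F" "sumset F F = F" unfolding HF_def by blast
      obtain b where "b \<in> A" using AB by blast
      have "card A \<le> card (sumset A A)" by (rule card_sumset_ge1[OF AB(2) AB(2) \<open>b \<in> A\<close>])
      then have "1 \<le> x" unfolding AB(1) by (rule ratio2_ge1[OF AB(2) AB(3)])
      moreover have e1: "real (card (sumset F F)) / real (card F) = 1"
      proof -
        have "0 < card F" using F by (simp add: card_gt_0_iff)
        then show ?thesis unfolding F(4) by simp
      qed
      moreover have "real (card (sumset F F)) / real (card F) \<in> ?SU"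
        by (rule CollectI, rule exI[of _ F]) (use F in blast)
      ultimately show ?thesis by (intro bexI[of _ 1]) simp_all
    qed
  qed
  have c2: "\<forall>x\<in>?SU. \<exists>y\<in>?SG. y \<le> x"
  proof (intro ballI)
    fix x assume "x \<in> ?SU"
    then obtain A where AB: "x = real (card (sumset A A)) / real (card A)"
      "finite A" "A \<noteq> {}" "U \<subseteq> A" by blast
    let ?e = "\<lambda>u. (u, 0::'b)"
    note tc = transfer_cards[OF emb_good[of "A \<union> A \<union> sumset A A \<union> sumset (sumset A A) U"] subset_UNIV subset_UNIV subset_UNIV]
    have sub: "V \<subseteq> ?e ` A" using Vd AB by auto
    have eq: "x = real (card (sumset (?e ` A) (?e ` A))) / real (card (?e ` A))"
      unfolding tc(1) tc(3) by (rule AB(1))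
    have "x \<in> ?SG"
      by (rule CollectI, rule exI[of _ "?e ` A"], intro conjI, rule eq)
         (use AB sub in auto)
    then show "\<exists>y\<in>?SG. y \<le> x" by (rule bexI[rotated]) simp
  qed
  show ?thesis unfolding alpha''_def by (rule inf_eq[OF n1 n2 p1 p2 c1 c2])
qed

lemma beta'_eq:
  fixes U :: "'a::ab_group_add set" and V :: "('a \<times> 'b::ab_group_add) set"
  assumes fU: "finite U" and Vd: "V = (\<lambda>u. (u, 0)) ` U" and H: "HM U V \<or> HF U"
  shows "beta' V = beta' U"
proof -
  have fV: "finite V" using fU Vd by simp
  let ?SG = "{real (card (sumset (sumset A B) V)) / sqrt (real (card A) * real (card B)) | A B.
     finite A \<and> A \<noteq> {} \<and> finite B \<and> B \<noteq> {} \<and> card A = card B}"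
  let ?SU = "{real (card (sumset (sumset A B) U)) / sqrt (real (card A) * real (card B)) | A B.
     finite A \<and> A \<noteq> {} \<and> finite B \<and> B \<noteq> {} \<and> card A = card B}"
  have n1: "?SG \<noteq> {}"
  proof -
    have "real (card (sumset (sumset {0} {0}) V)) / sqrt (real (card {0::'a\<times>'b}) * real (card {0::'a\<times>'b})) \<in> ?SG"
      by (rule CollectI, rule exI[of _ "{0}"], rule exI[of _ "{0}"], intro conjI, rule refl) auto
    then show ?thesis by blast
  qed
  have n2: "?SU \<noteq> {}"
  proof -
    have "real (card (sumset (sumset {0} {0}) U)) / sqrt (real (card {0::'a}) * real (card {0::'a})) \<in> ?SU"
      by (rule CollectI, rule exI[of _ "{0}"], rule exI[of _ "{0}"], intro conjI, rule refl) auto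
    then show ?thesis by blast
  qed
  have p1: "\<forall>x\<in>?SG. 0 \<le> x" by auto
  have p2: "\<forall>x\<in>?SU. 0 \<le> x" by auto
  have c1: "\<forall>x\<in>?SG. \<exists>y\<in>?SU. y \<le> x"
  proof (intro ballI)
    fix x assume "x \<in> ?SG"
    then obtain A B where AB: "x = real (card (sumset (sumset A B) V)) / sqrt (real (card A) * real (card B))"
      "finite A" "A \<noteq> {}" "finite B" "B \<noteq> {}" "card A = card B" by blast
    from H show "\<exists>y\<in>?SU. y \<le> x"
    proof
      assume "HM U V"
      then obtain f W where fW: "good_map f W (A \<union> B \<union> sumset A B \<union> sumset (sumset A B) V)"
        "A \<subseteq> W" "B \<subseteq> W" "V \<subseteq> W" "f ` V = U"
        using HM_use[OF \<open>HM U V\<close> AB(2) AB(4) fV] by (elim exE conjE) (rule that)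
      note tc = transfer_cards[OF fW(1-4)]
      note tc4 = tc(4)[unfolded fW(5)]
      have eq: "x = real (card (sumset (sumset (f ` A) (f ` B)) U)) / sqrt (real (card (f ` A)) * real (card (f ` B)))"
        unfolding tc(1) tc(2) tc4 by (rule AB(1))
      have cc: "card (f ` A) = card (f ` B)" unfolding tc(1) tc(2) by (rule AB(6))
      have "x \<in> ?SU"
        by (rule CollectI, rule exI[of _ "f ` A"], rule exI[of _ "f ` B"], intro conjI, rule eq)
           (use AB cc in auto)
      then show ?thesis by (rule bexI[rotated]) simp
    next
      assume "HF U"
      then obtain F where F: "finite F" "F \<noteq> {}" "U \<subseteq> F" "sumset F F = F"
        "sumset F U = (if U = {} then {} else F)" unfolding HF_def by blast
      let ?y = "real (card (sumset (sumset F F) U)) / sqrt (real (card F) * real (card F))"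
      have mem: "?y \<in> ?SU"
        by (rule CollectI, rule exI[of _ F], rule exI[of _ F], intro conjI, rule refl) (use F in auto)
      have "?y \<le> x"
      proof (cases "U = {}")
        case True
        then have "?y = 0" unfolding F(4) F(5) by simp
        moreover have "0 \<le> x" unfolding AB(1) by (rule ratio_nonneg)
        ultimately show ?thesis by linarith
      next
        case False
        have "0 < card F" using F by (simp add: card_gt_0_iff)
        then have "?y = 1" unfolding F(4) F(5) sqrt_sq using False by simp
        moreover have "1 \<le> x"
        proof -
          obtain v where "v \<in> V" using False Vd by blast
          obtain b where "b \<in> B" using AB by blast
          obtain a where "a \<in> A" using AB by blast
          have fAB: "finite (sumset A B)" by (rule finite_sumset[OF AB(2) AB(4)])
          have c0: "card (sumset A B) \<le> card (sumset (sumset A B) V)"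
            by (rule card_sumset_ge1[OF fAB fV \<open>v \<in> V\<close>])
          have "card A \<le> card (sumset A B)" by (rule card_sumset_ge1[OF AB(2) AB(4) \<open>b \<in> B\<close>])
          moreover have "card B \<le> card (sumset A B)" by (rule card_sumset_ge2[OF AB(2) AB(4) \<open>a \<in> A\<close>])
          ultimately show ?thesis unfolding AB(1) using c0
            by (intro ratio_ge1[OF AB(2) AB(4) AB(3) AB(5)]) simp_all
        qed
        ultimately show ?thesis by linarith
      qed
      then show ?thesis using mem by (intro bexI[of _ ?y])
    qed
  qed
  have c2: "\<forall>x\<in>?SU. \<exists>y\<in>?SG. y \<le> x"
  proof (intro ballI)
    fix x assume "x \<in> ?SU"
    then obtain A B where AB: "x = real (card (sumset (sumset A B) U)) / sqrt (real (card A) * real (card B))"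
      "finite A" "A \<noteq> {}" "finite B" "B \<noteq> {}" "card A = card B" by blast
    let ?e = "\<lambda>u. (u, 0::'b)"
    note tc = transfer_cards[OF emb_good[of "A \<union> B \<union> sumset A B \<union> sumset (sumset A B) U"] subset_UNIV subset_UNIV subset_UNIV]
    have tc4: "card (sumset (sumset (?e ` A) (?e ` B)) V) = card (sumset (sumset A B) U)"
      unfolding Vd by (rule tc(4))
    have eq: "x = real (card (sumset (sumset (?e ` A) (?e ` B)) V)) / sqrt (real (card (?e ` A)) * real (card (?e ` B)))"
      unfolding tc(1) tc(2) tc4 by (rule AB(1))
    have cc: "card (?e ` A) = card (?e ` B)" unfolding tc(1) tc(2) by (rule AB(6))
    have "x \<in> ?SG"
      by (rule CollectI, rule exI[of _ "?e ` A"], rule exI[of _ "?e ` B"], intro conjI, rule eq)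
         (use AB cc in auto)
    then show "\<exists>y\<in>?SG. y \<le> x" by (rule bexI[rotated]) simp
  qed
  show ?thesis unfolding beta'_def by (rule inf_eq[OF n1 n2 p1 p2 c1 c2])
qed


lemma beta''_eq:
  fixes U :: "'a::ab_group_add set" and V :: "('a \<times> 'b::ab_group_add) set"
  assumes fU: "finite U" and Vd: "V = (\<lambda>u. (u, 0)) ` U" and H: "HM U V \<or> HF U"
  shows "beta'' V = beta'' U"
proof -
  have fV: "finite V" using fU Vd by simp
  let ?SG = "{real (card (sumset (sumset A A) V)) / real (card A) | A. finite A \<and> A \<noteq> {}}"
  let ?SU = "{real (card (sumset (sumset A A) U)) / real (card A) | A. finite A \<and> A \<noteq> {}}"
  have n1: "?SG \<noteq> {}"
  proof -
    have "real (card (sumset (sumset {0} {0}) V)) / real (card {0::'a\<times>'b}) \<in> ?SG"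
      by (rule CollectI, rule exI[of _ "{0}"], intro conjI, rule refl) auto
    then show ?thesis by blast
  qed
  have n2: "?SU \<noteq> {}"
  proof -
    have "real (card (sumset (sumset {0} {0}) U)) / real (card {0::'a}) \<in> ?SU"
      by (rule CollectI, rule exI[of _ "{0}"], intro conjI, rule refl) auto
    then show ?thesis by blast
  qed
  have p1: "\<forall>x\<in>?SG. 0 \<le> x" by auto
  have p2: "\<forall>x\<in>?SU. 0 \<le> x" by auto
  have c1: "\<forall>x\<in>?SG. \<exists>y\<in>?SU. y \<le> x"
  proof (intro ballI)
    fix x assume "x \<in> ?SG"
    then obtain A where AB: "x = real (card (sumset (sumset A A) V)) / real (card A)"
      "finite A" "A \<noteq> {}" by blast
    from H show "\<exists>y\<in>?SU. y \<le> x"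
    proof
      assume "HM U V"
      then obtain f W where fW: "good_map f W (A \<union> A \<union> sumset A A \<union> sumset (sumset A A) V)"
        "A \<subseteq> W" "A \<subseteq> W" "V \<subseteq> W" "f ` V = U"
        using HM_use[OF \<open>HM U V\<close> AB(2) AB(2) fV] by (elim exE conjE) (rule that)
      note tc = transfer_cards[OF fW(1-4)]
      note tc4 = tc(4)[unfolded fW(5)]
      have eq: "x = real (card (sumset (sumset (f ` A) (f ` A)) U)) / real (card (f ` A))"
        unfolding tc(1) tc4 by (rule AB(1))
      have "x \<in> ?SU"
        by (rule CollectI, rule exI[of _ "f ` A"], intro conjI, rule eq)
           (use AB in auto)
      then show ?thesis by (rule bexI[rotated]) simp
    next
      assume "HF U"
      then obtain F where F: "finite F" "F \<noteq> {}" "U \<subseteq> F" "sumset F F = F"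
        "sumset F U = (if U = {} then {} else F)" unfolding HF_def by blast
      let ?y = "real (card (sumset (sumset F F) U)) / real (card F)"
      have mem: "?y \<in> ?SU"
        by (rule CollectI, rule exI[of _ F], intro conjI, rule refl) (use F in auto)
      have "?y \<le> x"
      proof (cases "U = {}")
        case True
        then have "?y = 0" unfolding F(4) F(5) by simp
        moreover have "0 \<le> x" unfolding AB(1) by simp
        ultimately show ?thesis by linarith
      next
        case False
        have "0 < card F" using F by (simp add: card_gt_0_iff)
        then have "?y = 1" unfolding F(4) F(5) using False by simp
        moreover have "1 \<le> x"
        proof -
          obtain v where "v \<in> V" using False Vd by blast
          obtain b where "b \<in> A" using AB by blast
          have fAB: "finite (sumset A A)" by (rule finite_sumset[OF AB(2) AB(2)])
          have c0: "card (sumset A A) \<le> card (sumset (sumset A A) V)"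
            by (rule card_sumset_ge1[OF fAB fV \<open>v \<in> V\<close>])
          have "card A \<le> card (sumset A A)" by (rule card_sumset_ge1[OF AB(2) AB(2) \<open>b \<in> A\<close>])
          then have "card A \<le> card (sumset (sumset A A) V)" using c0 by linarith
          then show ?thesis unfolding AB(1) by (rule ratio2_ge1[OF AB(2) AB(3)])
        qed
        ultimately show ?thesis by linarith
      qed
      then show ?thesis using mem by (intro bexI[of _ ?y])
    qed
  qed
  have c2: "\<forall>x\<in>?SU. \<exists>y\<in>?SG. y \<le> x"
  proof (intro ballI)
    fix x assume "x \<in> ?SU"
    then obtain A where AB: "x = real (card (sumset (sumset A A) U)) / real (card A)"
      "finite A" "A \<noteq> {}" by blast
    let ?e = "\<lambda>u. (u, 0::'b)"
    note tc = transfer_cards[OF emb_good[of "A \<union> A \<union> sumset A A \<union> sumset (sumset A A) U"] subset_UNIV subset_UNIV subset_UNIV]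
    have tc4: "card (sumset (sumset (?e ` A) (?e ` A)) V) = card (sumset (sumset A A) U)"
      unfolding Vd by (rule tc(4))
    have eq: "x = real (card (sumset (sumset (?e ` A) (?e ` A)) V)) / real (card (?e ` A))"
      unfolding tc(1) tc4 by (rule AB(1))
    have "x \<in> ?SG"
      by (rule CollectI, rule exI[of _ "?e ` A"], intro conjI, rule eq)
         (use AB in auto)
    then show "\<exists>y\<in>?SG. y \<le> x" by (rule bexI[rotated]) simp
  qed
  show ?thesis unfolding beta''_def by (rule inf_eq[OF n1 n2 p1 p2 c1 c2])
qed

theorem mainTheorem17:
  fixes U :: "'a::ab_group_add set"
  assumes "torsion_free TYPE('b::ab_group_add)"
    and "finite U"
  defines "V \<equiv> (\<lambda>u. (u, 0::'b)) ` U"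
  shows "alpha V = alpha U \<and> alpha' V = alpha' U \<and> alpha'' V = alpha'' U
         \<and> beta' V = beta' U \<and> beta'' V = beta'' U"
proof -
  have tf: "torsion_free TYPE('b)" and fU: "finite U" using assms by auto
  have Vd: "V = (\<lambda>u. (u, 0)) ` U" unfolding V_def by (rule refl)
  have fV: "finite V" using fU unfolding V_def by simp
  have H: "HM U V \<or> HF U"
  proof (cases "\<exists>g::'a. \<forall>n>0. natmul n g \<noteq> 0")
    case True
    then obtain g :: 'a where g: "\<forall>n>0. natmul n g \<noteq> 0" by blast
    have "HM U V" unfolding HM_def
    proof (intro allI impI)
      fix X :: "('a \<times> 'b) set" assume fX: "finite X"
      let ?Y = "X \<union> V"
      have fY: "finite ?Y" using fX fV by simp
      obtain f where f: "\<forall>u. f (u, 0) = u"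
        "\<forall>x\<in>UNIV \<times> gen (snd ` ?Y). \<forall>y\<in>UNIV \<times> gen (snd ` ?Y). f (x + y) = f x + f y"
        "inj_on f ?Y" using freiman_map[OF tf g fY] by blast
      let ?W = "(UNIV::'a set) \<times> gen (snd ` ?Y)"
      have clo: "\<forall>x\<in>?W. \<forall>y\<in>?W. x + y \<in> ?W"
      proof (intro ballI)
        fix x y assume "x \<in> ?W" "y \<in> ?W"
        then have "snd x \<in> gen (snd ` ?Y)" "snd y \<in> gen (snd ` ?Y)" by auto
        then have "snd (x + y) \<in> gen (snd ` ?Y)" by (simp add: gen_add)
        then show "x + y \<in> ?W" by (simp add: mem_Times_iff)
      qed
      have sub: "?Y \<subseteq> ?W"
      proof
        fix x assume "x \<in> ?Y"
        then have "snd x \<in> snd ` ?Y" by blast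
        then have "snd x \<in> gen (snd ` ?Y)" using gen_mem[of "snd ` ?Y"] fY by blast
        then show "x \<in> ?W" by (simp add: mem_Times_iff)
      qed
      have gm: "good_map f ?W ?Y" unfolding good_map_def using f(2) clo sub f(3) by (intro conjI)
      have fV: "f ` V = U" unfolding V_def image_image using f(1) by simp
      show "\<exists>f W. good_map f W (X \<union> V) \<and> f ` V = U" using gm fV by blast
    qed
    then show ?thesis by blast
  next
    case False
    then have tor: "\<forall>g::'a. \<exists>n>0. natmul n g = 0" by blast
    let ?F = "gen U"
    have fF: "finite ?F" by (rule torsion_gen_finite[OF tor fU])
    have neF: "?F \<noteq> {}" using gen_0[of U] by blast
    have UF: "U \<subseteq> ?F" using gen_mem[OF fU] by blast
    have FF: "sumset ?F ?F = ?F"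
    proof
      show "sumset ?F ?F \<subseteq> ?F" unfolding sumset_def using gen_add by blast
      show "?F \<subseteq> sumset ?F ?F"
      proof
        fix x assume "x \<in> ?F"
        then have "x = x + 0 \<and> x \<in> ?F \<and> (0::'a) \<in> ?F" by simp
        then show "x \<in> sumset ?F ?F" unfolding sumset_def by blast
      qed
    qed
    have FU: "sumset ?F U = (if U = {} then {} else ?F)"
    proof (cases "U = {}")
      case True then show ?thesis by simp
    next
      case False
      then obtain u where u: "u \<in> U" by blast
      have "sumset ?F U = ?F"
      proof
        show "sumset ?F U \<subseteq> ?F" unfolding sumset_def using gen_add UF by blast
        show "?F \<subseteq> sumset ?F U"
        proof
          fix x assume x: "x \<in> ?F"
          have "x - u \<in> ?F" using gen_diff[OF x] UF u by blast
          then have "x = (x - u) + u \<and> x - u \<in> ?F \<and> u \<in> U" using u by simp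
          then show "x \<in> sumset ?F U" unfolding sumset_def by blast
        qed
      qed
      then show ?thesis using False by simp
    qed
    have "HF U" unfolding HF_def using fF neF UF FF FU by blast
    then show ?thesis by blast
  qed
  show ?thesis
    using alpha_eq[OF fU Vd H] alpha'_eq[OF fU Vd H] alpha''_eq[OF fU Vd H]
      beta'_eq[OF fU Vd H] beta''_eq[OF fU Vd H] by blast
qed

end
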